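(* Let $L$ be a full intersection lattice such that $\hat 1\in\bullet(\mathrm{nti}(L))$, and let $T$ be a witnessing tree for this. Then $\mathrm{mult}_T(U)=-\mu_L(U,\hat 1)$ for every $U\in\mathrm{nti}(L)$.
   Context: A finite family $\mathcal{F}$ of sets is non-trivial if it is non-empty and no $X\in\mathcal{F}$ satisfies $X=\bigcup\mathcal{F}$. For such $\mathcal{F}$ and non-empty $\mathcal{T}\subseteq\mathcal{F}$, let $S_{\mathcal{T}}=\bigcap\mathcal{T}$, and let $S_\emptyset=\bigcup\mathcal{F}$. The intersection lattice of $\mathcal{F}$ is $\mathbb{L}_{\mathcal{F}}=(\{S_{\mathcal{T}}\mid\mathcal{T}\subseteq\mathcal{F}\},\subseteq)$, with greatest element $\hat 1=\bigcup\mathcal{F}$; an intersection lattice is one of this form. For $L=\mathbb{L}_{\mathcal{F}}$ and $x\in\hat 1$, let $\min_L(x)=S_{\{X\in\mathcal{F}\mid x\in X\}}$; $L$ is full if for every $U\in L$, $U\neq\hat 1$, there is $x\in\hat 1$ with $\min_L(x)=U$. The Möbius function of a finite poset $P$ is given for $x\le y$ by $\mu_P(y,y)=1$ and $\mu_P(x,y)=-\sum_{x<z\le y}\mu_P(z,y)$. Let $\mathrm{nti}(L)=\{U\in L\mid U\neq\hat 1\}$. For sets $A,B$, $A\,\dot\cup\,B=A\cup B$ is defined only when $A\cap B=\emptyset$, and $A\,\dot\setminus\,B=A\setminus B$ is defined only when $B\subseteq A$. For a finite family $\mathcal{G}$ of sets, $\bullet(\mathcal{G})$ is the smallest family of sets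 containing $\emptyset$ and every member of $\mathcal{G}$ and closed under well-defined disjoint unions and subset complements. A witnessing tree of $X\in\bullet(\mathcal{G})$ is a rooted ordered tree whose leaves are labelled by $\emptyset$ or by members of $\mathcal{G}$, and whose internal nodes are labelled $\dot\cup$ or $\dot\setminus$ ($\dot\setminus$-nodes being binary), such that evaluating each internal node as the corresponding operation on its children's values (in order) is always well defined and the root evaluates to $X$. For a leaf $\ell$ of $T$, its polarity $\mathrm{pol}_T(\ell)$ is $1$ if the path from the root to $\ell$ goes to the right (second) child of a $\dot\setminus$-node an even number of times, and $-1$ otherwise. For $U\in\mathcal{G}\cup\{\emptyset\}$, $\mathrm{mult}_T(U)=\sum_{\ell}\mathrm{pol}_T(\ell)$, the sum over leaves $\ell$ of $T$ labelled $U$. *)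

theory Defs
  imports Main
begin

definition nontrivial_family :: "'a set set \<Rightarrow> bool" where
  "nontrivial_family F \<longleftrightarrow> finite F \<and> F \<noteq> {} \<and> (\<forall>X\<in>F. X \<noteq> \<Union>F)"

definition S_of :: "'a set set \<Rightarrow> 'a set set \<Rightarrow> 'a set" where
  "S_of F T = (if T = {} then \<Union>F else \<Inter>T)"

text \<open>Carrier of the intersection lattice L_F (ordered by set inclusion).\<close>
definition ilat :: "'a set set \<Rightarrow> 'a set set" where
  "ilat F = {S_of F T | T. T \<subseteq> F}"

definition top_of :: "'a set set \<Rightarrow> 'a set" where
  "top_of F = \<Union>F"

definition min_L :: "'a set set \<Rightarrow> 'a \<Rightarrow> 'a set" where
  "min_L F x = S_of F {X\<in>F. x \<in> X}"

definition full :: "'a set set \<Rightarrow> bool" where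
  "full F \<longleftrightarrow> (\<forall>U\<in>ilat F. U \<noteq> top_of F \<longrightarrow> (\<exists>x\<in>top_of F. min_L F x = U))"

definition nti :: "'a set set \<Rightarrow> 'a set set" where
  "nti F = {U\<in>ilat F. U \<noteq> top_of F}"

function mobius :: "'a set set \<Rightarrow> 'a set \<Rightarrow> 'a set \<Rightarrow> int" where
  "mobius P x y =
     (if x = y then 1
      else if finite P \<and> x \<subseteq> y then
        - (\<Sum>z\<in>{z\<in>P. x \<subset> z \<and> z \<subseteq> y}. mobius P z y)
      else 0)"
  by auto
termination
proof (relation "measure (\<lambda>(P,x,y). card {w\<in>P. x \<subset> w \<and> w \<subseteq> y})", goal_cases)
  case 1 then show ?case by simp
next
  case (2 P x y z)
  have "{w\<in>P. z \<subset> w \<and> w \<subseteq> y} \<subset> {w\<in>P. x \<subset> w \<and> w \<subseteq> y}"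
    using 2 by auto
  then show ?case using 2 by (simp add: psubset_card_mono)
qed

declare mobius.simps[simp del]

inductive_set bullet :: "'a set set \<Rightarrow> 'a set set" for G where
  empty: "{} \<in> bullet G"
| base: "X \<in> G \<Longrightarrow> X \<in> bullet G"
| dunion: "A \<in> bullet G \<Longrightarrow> B \<in> bullet G \<Longrightarrow> A \<inter> B = {} \<Longrightarrow> A \<union> B \<in> bullet G"
| sdiff: "A \<in> bullet G \<Longrightarrow> B \<in> bullet G \<Longrightarrow> B \<subseteq> A \<Longrightarrow> A - B \<in> bullet G"

datatype 'a wtree = Leaf "'a set" | DUnion "'a wtree list" | DDiff "'a wtree" "'a wtree"

fun wval :: "'a wtree \<Rightarrow> 'a set" where
  "wval (Leaf X) = X"
| "wval (DUnion ts) = \<Union>(set (map wval ts))"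
| "wval (DDiff a b) = wval a - wval b"

fun well_defined :: "'a wtree \<Rightarrow> bool" where
  "well_defined (Leaf X) = True"
| "well_defined (DUnion ts) =
     (ts \<noteq> [] \<and> (\<forall>t\<in>set ts. well_defined t) \<and>
      (\<forall>i<length ts. \<forall>j<length ts. i \<noteq> j \<longrightarrow> wval (ts ! i) \<inter> wval (ts ! j) = {}))"
| "well_defined (DDiff a b) = (well_defined a \<and> well_defined b \<and> wval b \<subseteq> wval a)"

fun leaves_pol :: "'a wtree \<Rightarrow> ('a set \<times> int) list" where
  "leaves_pol (Leaf X) = [(X, 1)]"
| "leaves_pol (DUnion ts) = concat (map leaves_pol ts)"
| "leaves_pol (DDiff a b) = leaves_pol a @ map (\<lambda>(X, p). (X, - p)) (leaves_pol b)"

definition witnessing_tree :: "'a set set \<Rightarrow> 'a set \<Rightarrow> 'a wtree \<Rightarrow> bool" where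
  "witnessing_tree G X T \<longleftrightarrow>
     (\<forall>(Y, p)\<in>set (leaves_pol T). Y = {} \<or> Y \<in> G) \<and> well_defined T \<and> wval T = X"

definition mult :: "'a wtree \<Rightarrow> 'a set \<Rightarrow> int" where
  "mult T U = sum_list [p. (Y, p) \<leftarrow> leaves_pol T, Y = U]"

end

theory Submission
  imports Defs
begin

lemma disj_list_ind:
  assumes "\<forall>i<length ts. \<forall>j<length ts. i \<noteq> j \<longrightarrow> f (ts ! i) \<inter> f (ts ! j) = {}"
  shows "sum_list (map (\<lambda>t. if x \<in> f t then 1 else 0 :: int) ts)
         = (if x \<in> \<Union>(f ` set ts) then 1 else 0)"
  using assms
proof (induction ts)
  case Nil then show ?case by simp
next
  case (Cons a ts)
  have h1: "\<forall>i<length ts. \<forall>j<length ts. i \<noteq> j \<longrightarrow> f (ts ! i) \<inter> f (ts ! j) = {}"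
  proof (intro allI impI)
    fix i j assume "i < length ts" "j < length ts" "i \<noteq> j"
    then show "f (ts ! i) \<inter> f (ts ! j) = {}"
      using Cons.prems[rule_format, of "Suc i" "Suc j"] by simp
  qed
  have h2: "\<forall>t\<in>set ts. f a \<inter> f t = {}"
  proof
    fix t assume "t \<in> set ts"
    then obtain j where "j < length ts" "ts ! j = t" by (auto simp: in_set_conv_nth)
    then show "f a \<inter> f t = {}" using Cons.prems[rule_format, of 0 "Suc j"] by simp
  qed
  show ?case using Cons.IH[OF h1] h2 by auto
qed

lemma neg_map:
  fixes L :: "('a set \<times> int) list"
  shows "sum_list [p. (Y, p) \<leftarrow> map (\<lambda>(X, p). (X, - p)) L, x \<in> Y]
            = - sum_list [p. (Y, p) \<leftarrow> L, x \<in> Y]"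
  by (induction L) auto

lemma wt_ind:
  "well_defined T \<Longrightarrow>
   (if x \<in> wval T then 1 else 0 :: int) = sum_list [p. (Y, p) \<leftarrow> leaves_pol T, x \<in> Y]"
proof (induction T)
  case (Leaf X) then show ?case by simp
next
  case (DUnion ts)
  have "sum_list [p. (Y, p) \<leftarrow> leaves_pol (DUnion ts), x \<in> Y]
      = sum_list (map (\<lambda>t. sum_list [p. (Y, p) \<leftarrow> leaves_pol t, x \<in> Y]) ts)"
    by (induction ts) auto
  also have "\<dots> = sum_list (map (\<lambda>t. if x \<in> wval t then 1 else 0 :: int) ts)"
    using DUnion by (intro arg_cong[where f=sum_list] map_cong) auto
  also have "\<dots> = (if x \<in> \<Union>(wval ` set ts) then 1 else 0)"
    using DUnion.prems by (intro disj_list_ind) simp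
  finally show ?case by simp
next
  case (DDiff a b)
  have "sum_list [p. (Y, p) \<leftarrow> leaves_pol (DDiff a b), x \<in> Y]
      = sum_list [p. (Y, p) \<leftarrow> leaves_pol a, x \<in> Y] - sum_list [p. (Y, p) \<leftarrow> leaves_pol b, x \<in> Y]"
    using neg_map[where L="leaves_pol b" and x=x] by simp
  then show ?case using DDiff by (cases "x \<in> wval a"; cases "x \<in> wval b") auto
qed

lemma sum_list_split:
  assumes "finite S" "fst ` set L \<subseteq> S"
  shows "sum_list [p. (Y, p) \<leftarrow> L, P Y]
       = (\<Sum>U\<in>S. if P U then sum_list [p. (Y, p) \<leftarrow> L, Y = U] else 0 :: int)"
  using assms(2)
proof (induction L)
  case Nil then show ?case by (simp add: sum.neutral)
next
  case (Cons a L)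
  obtain Y0 p0 where a: "a = (Y0, p0)" by force
  have Y0: "Y0 \<in> S" using Cons.prems a by auto
  have "(\<Sum>U\<in>S. if P U then sum_list [p. (Y, p) \<leftarrow> a # L, Y = U] else 0)
     = (\<Sum>U\<in>S. (if P U \<and> U = Y0 then p0 else 0) + (if P U then sum_list [p. (Y, p) \<leftarrow> L, Y = U] else 0))"
    by (intro sum.cong) (auto simp: a)
  also have "\<dots> = (\<Sum>U\<in>S. if P U \<and> U = Y0 then p0 else 0) + (\<Sum>U\<in>S. if P U then sum_list [p. (Y, p) \<leftarrow> L, Y = U] else 0)"
    by (rule sum.distrib)
  also have "(\<Sum>U\<in>S. if P U \<and> U = Y0 then p0 else 0) = (\<Sum>U\<in>S. if U = Y0 then (if P Y0 then p0 else 0) else 0)"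
    by (intro sum.cong) auto
  also have "\<dots> = (if P Y0 then p0 else 0)"
    using Y0 assms(1) by simp
  finally show ?case using Cons a by auto
qed

lemma uniq:
  fixes f g :: "'a set \<Rightarrow> int"
  assumes "finite N"
    and "\<forall>V\<in>N. (\<Sum>U\<in>N. if V \<subseteq> U then f U else 0) = (\<Sum>U\<in>N. if V \<subseteq> U then g U else 0)"
  shows "\<forall>V\<in>N. f V = g V"
proof -
  have "\<And>n V. card {U\<in>N. V \<subset> U} = n \<Longrightarrow> V \<in> N \<Longrightarrow> f V = g V"
  proof -
    fix n
    show "\<And>V. card {U\<in>N. V \<subset> U} = n \<Longrightarrow> V \<in> N \<Longrightarrow> f V = g V"
    proof (induction n rule: less_induct)
      case (less n V)
      have IH: "\<And>U. U \<in> N \<Longrightarrow> V \<subset> U \<Longrightarrow> f U = g U"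
      proof -
        fix U assume U: "U \<in> N" "V \<subset> U"
        have "{W\<in>N. U \<subset> W} \<subset> {W\<in>N. V \<subset> W}" using U by auto
        then have "card {W\<in>N. U \<subset> W} < n" using less.prems assms(1)
          by (metis (no_types, lifting) finite_subset mem_Collect_eq psubset_card_mono subsetI)
        then show "f U = g U" using less.IH U(1) by blast
      qed
      have split: "\<And>h::'a set \<Rightarrow> int. (\<Sum>U\<in>N. if V \<subseteq> U then h U else 0)
           = h V + (\<Sum>U\<in>N. if V \<subset> U then h U else 0)"
      proof -
        fix h :: "'a set \<Rightarrow> int"
        have "(\<Sum>U\<in>N. if V \<subseteq> U then h U else 0)
            = (\<Sum>U\<in>N. (if U = V then h U else 0) + (if V \<subset> U then h U else 0))"
          by (intro sum.cong) auto
        also have "\<dots> = h V + (\<Sum>U\<in>N. if V \<subset> U then h U else 0)"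
          using less.prems(2) assms(1) by (simp add: sum.distrib sum.delta)
        finally show "(\<Sum>U\<in>N. if V \<subseteq> U then h U else 0)
           = h V + (\<Sum>U\<in>N. if V \<subset> U then h U else 0)" .
      qed
      have "(\<Sum>U\<in>N. if V \<subset> U then f U else 0) = (\<Sum>U\<in>N. if V \<subset> U then g U else 0)"
        using IH by (intro sum.cong) auto
      then show ?case using assms(2) less.prems(2) split[of f] split[of g] by auto
    qed
  qed
  then show ?thesis by blast
qed

theorem proposition4p7:
  fixes F :: "'a set set" and T :: "'a wtree"
  assumes "nontrivial_family F"
    and "full F"
    and "top_of F \<in> bullet (nti F)"
    and "witnessing_tree (nti F) (top_of F) T"
  shows "\<forall>U\<in>nti F. mult T U = - mobius (ilat F) U (top_of F)"
proof -
  let ?P = "ilat F" and ?t = "top_of F" and ?N = "nti F"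
  have finF: "finite F" and neF: "F \<noteq> {}" using assms(1) by (auto simp: nontrivial_family_def)
  have finP: "finite ?P" unfolding ilat_def using finF
    by (simp add: setcompr_eq_image)
  have finN: "finite ?N" using finP unfolding nti_def by simp
  have topP: "?t \<in> ?P" unfolding ilat_def top_of_def S_of_def by auto
  have subP: "\<And>U. U \<in> ?P \<Longrightarrow> U \<subseteq> ?t"
  proof -
    fix U assume "U \<in> ?P"
    then obtain Tt where Tt: "Tt \<subseteq> F" "U = S_of F Tt" unfolding ilat_def by auto
    then show "U \<subseteq> ?t" unfolding top_of_def S_of_def by auto
  qed
  have memx: "\<And>x U. x \<in> ?t \<Longrightarrow> U \<in> ?N \<Longrightarrow> (x \<in> U \<longleftrightarrow> min_L F x \<subseteq> U)"
  proof -
    fix x U assume x: "x \<in> ?t" and U: "U \<in> ?N"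
    then obtain Tt where Tt: "Tt \<subseteq> F" "U = S_of F Tt" unfolding nti_def ilat_def by auto
    have "Tt \<noteq> {}" using U Tt unfolding nti_def top_of_def S_of_def by auto
    then have U': "U = \<Inter>Tt" using Tt by (simp add: S_of_def)
    have ne: "{X\<in>F. x \<in> X} \<noteq> {}" using x unfolding top_of_def by auto
    then have m: "min_L F x = \<Inter>{X\<in>F. x \<in> X}" by (simp only: min_L_def S_of_def if_not_P[OF ne] if_False)
    show "x \<in> U \<longleftrightarrow> min_L F x \<subseteq> U"
    proof
      assume "x \<in> U" then show "min_L F x \<subseteq> U" using U' Tt(1) m by auto
    next
      assume "min_L F x \<subseteq> U" then show "x \<in> U" using m by auto
    qed
  qed
  have wd: "well_defined T" and wv: "wval T = ?t"
    and lv: "\<forall>(Y, p)\<in>set (leaves_pol T). Y = {} \<or> Y \<in> ?N"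
    using assms(4) by (auto simp: witnessing_tree_def)
  have eq1: "\<And>x. x \<in> ?t \<Longrightarrow> (\<Sum>U\<in>?N. if x \<in> U then mult T U else 0) = 1"
  proof -
    fix x assume x: "x \<in> ?t"
    have "fst ` set (leaves_pol T) \<subseteq> insert {} ?N" using lv by auto
    then have "sum_list [p. (Y, p) \<leftarrow> leaves_pol T, x \<in> Y]
       = (\<Sum>U\<in>insert {} ?N. if x \<in> U then mult T U else 0)"
      unfolding mult_def using finN by (subst sum_list_split[where S="insert {} ?N"]) auto
    also have "\<dots> = (\<Sum>U\<in>?N. if x \<in> U then mult T U else 0)"
      using finN by (simp add: sum.insert_if)
    finally show "(\<Sum>U\<in>?N. if x \<in> U then mult T U else 0) = 1"
      using wt_ind[OF wd, of x] wv x by simp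
  qed
  have eqA: "\<forall>V\<in>?N. (\<Sum>U\<in>?N. if V \<subseteq> U then mult T U else 0) = 1"
  proof
    fix V assume V: "V \<in> ?N"
    then obtain x where x: "x \<in> ?t" "min_L F x = V"
      using assms(2) unfolding full_def nti_def by auto
    have "(\<Sum>U\<in>?N. if V \<subseteq> U then mult T U else 0) = (\<Sum>U\<in>?N. if x \<in> U then mult T U else 0)"
      using memx x by (intro sum.cong) auto
    then show "(\<Sum>U\<in>?N. if V \<subseteq> U then mult T U else 0) = 1" using eq1 x by simp
  qed
  have eqB: "\<forall>V\<in>?N. (\<Sum>U\<in>?N. if V \<subseteq> U then - mobius ?P U ?t else 0) = 1"
  proof
    fix V assume V: "V \<in> ?N"
    have Vt: "V \<noteq> ?t" "V \<subseteq> ?t" "V \<in> ?P" using V subP unfolding nti_def by auto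
    have setq: "{z\<in>?P. V \<subset> z \<and> z \<subseteq> ?t} = insert ?t {z\<in>?N. V \<subset> z}"
      using Vt topP subP unfolding nti_def by auto
    have finS: "finite {z\<in>?N. V \<subset> z}" using finN by simp
    have tn: "?t \<notin> {z\<in>?N. V \<subset> z}" unfolding nti_def by auto
    have "mobius ?P V ?t = - (\<Sum>z\<in>{z\<in>?P. V \<subset> z \<and> z \<subseteq> ?t}. mobius ?P z ?t)"
      using Vt finP by (subst mobius.simps) simp
    also have "\<dots> = - (1 + (\<Sum>z\<in>{z\<in>?N. V \<subset> z}. mobius ?P z ?t))"
      using finS tn by (simp add: setq mobius.simps[of _ ?t ?t])
    finally have mV: "mobius ?P V ?t = - (1 + (\<Sum>z\<in>{z\<in>?N. V \<subset> z}. mobius ?P z ?t))" .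
    have "(\<Sum>U\<in>?N. if V \<subseteq> U then - mobius ?P U ?t else 0)
        = (\<Sum>U\<in>?N. (if U = V then - mobius ?P U ?t else 0) + (if V \<subset> U then - mobius ?P U ?t else 0))"
      by (intro sum.cong) auto
    also have "\<dots> = - mobius ?P V ?t + (\<Sum>U\<in>?N. if V \<subset> U then - mobius ?P U ?t else 0)"
      using V finN by (simp add: sum.distrib sum.delta)
    also have "(\<Sum>U\<in>?N. if V \<subset> U then - mobius ?P U ?t else 0) = - (\<Sum>z\<in>{z\<in>?N. V \<subset> z}. mobius ?P z ?t)"
      using finN by (simp add: sum.inter_filter[symmetric] sum_negf)
    finally show "(\<Sum>U\<in>?N. if V \<subseteq> U then - mobius ?P U ?t else 0) = 1" using mV by simp
  qed
  show ?thesis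
    by (rule uniq[OF finN]) (use eqA eqB in auto)
qed

end
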